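(* Let $\mathcal{X}\times\mathcal{Y}$ be a sample space, $\mathcal{H}$ a set of hypotheses $h:\mathcal{X}\to\mathcal{Y}$, $n\in\mathbb{N}$, and let $\mathcal{A}$ be a (possibly randomized) learning algorithm, i.e. a Markov kernel $\mathcal{P}_{H|S}$ from $(\mathcal{X}\times\mathcal{Y})^n$ to $\mathcal{H}$. Let $S\sim\mathcal{P}^n$ for some distribution $\mathcal{P}$ on $\mathcal{X}\times\mathcal{Y}$, let $H=\mathcal{A}(S)$, and assume the joint law $\mathcal{P}_{SH}$ satisfies $\mathcal{P}_{SH}\ll\mathcal{P}_S\mathcal{P}_H$. Let $\ell$ be the $0$-$1$ loss. Given $\eta\in(0,1)$, let $E=\{(s,h):|L_{\mathcal{P}}(h)-L_s(h)|>\eta\}$. Then for every $\alpha>1$, $$\mathbb{P}((S,\mathcal{A}(S))\in E)\le\exp\left(\frac{\alpha-1}{\alpha}\left(I_\alpha(S;\mathcal{A}(S))+\log 2-2n\eta^2\right)\right).$$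
   Context: The $0$-$1$ loss is $\ell(h,(x,y))=\mathbb{1}_{h(x)\neq y}$. The population risk is $L_{\mathcal{P}}(h)=\mathbb{E}_{(x,y)\sim\mathcal{P}}[\ell(h,(x,y))]=\mathcal{P}(\{(x,y):h(x)\ne y\})$, and for $s=((x_1,y_1),\dots,(x_n,y_n))$ the empirical risk is $L_s(h)=\frac1n\sum_{i=1}^n\ell(h,(x_i,y_i))$. Sibson's $\alpha$-mutual information is $I_\alpha(S;H)=\min_{Q_H}D_\alpha(\mathcal{P}_{SH}\|\mathcal{P}_SQ_H)$, where $D_\alpha(\mathcal{P}\|\mathcal{Q})=\frac{1}{\alpha-1}\ln\int p^\alpha q^{1-\alpha}d\mu$ is the Rényi divergence. Logarithms are natural. Measurability of all relevant sets and maps is assumed. *)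

theory Defs
  imports "HOL-Probability.Probability"
begin

definition pop_risk :: "('x \<times> 'y) measure \<Rightarrow> ('x \<Rightarrow> 'y) \<Rightarrow> real" where
  "pop_risk P h = measure P {z \<in> space P. h (fst z) \<noteq> snd z}"

definition emp_risk :: "nat \<Rightarrow> (nat \<Rightarrow> 'x \<times> 'y) \<Rightarrow> ('x \<Rightarrow> 'y) \<Rightarrow> real" where
  "emp_risk n s h = (\<Sum>i<n. (if h (fst (s i)) \<noteq> snd (s i) then 1 else 0)) / real n"

text \<open>Renyi divergence of order alpha > 1, D_alpha(M || N):
  (1/(alpha-1)) ln of the integral of (dM/dN)^alpha dN if M is absolutely continuous
  w.r.t. N, and +infinity otherwise (this agrees with the formula
  (1/(alpha-1)) ln of the integral of p^alpha q^(1-alpha) for alpha > 1).\<close>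
definition renyi_div :: "real \<Rightarrow> 'a measure \<Rightarrow> 'a measure \<Rightarrow> ereal" where
  "renyi_div \<alpha> M N =
     (if absolutely_continuous N M then
        (let J = (\<integral>\<^sup>+ x. ennreal (enn2real (RN_deriv N M x) powr \<alpha>) \<partial>N)
         in if J = \<infinity> then \<infinity> else ereal (ln (enn2real J) / (\<alpha> - 1)))
      else \<infinity>)"

definition sibson_mi :: "real \<Rightarrow> 's measure \<Rightarrow> 'h measure \<Rightarrow> ('s \<times> 'h) measure \<Rightarrow> ereal" where
  "sibson_mi \<alpha> PS Hm PSH =
     (INF Q \<in> {Q. prob_space Q \<and> sets Q = sets Hm}. renyi_div \<alpha> PSH (PS \<Otimes>\<^sub>M Q))"

end

theory Submission imports Defs begin
lemma holder_rn:
  fixes N M :: "'a measure" and \<alpha> Jr :: real and E :: "'a set"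
  assumes fin: "finite_measure N" and Mfin: "finite_measure M"
    and ac: "absolutely_continuous N M" and sets: "sets M = sets N"
    and alpha: "1 < \<alpha>" and E: "E \<in> sets N"
    and J: "(\<integral>\<^sup>+ x. ennreal (enn2real (RN_deriv N M x) powr \<alpha>) \<partial>N) = ennreal Jr"
    and Jr: "0 \<le> Jr"
  shows "emeasure M E \<le> ennreal (Jr powr (1/\<alpha>) * measure N E powr ((\<alpha>-1)/\<alpha>))"
proof -
  interpret N: finite_measure N by fact
  interpret M: finite_measure M by fact
  define f where "f = RN_deriv N M"
  define g where "g x = enn2real (f x)" for x
  have dens: "density N f = M" unfolding f_def by (rule N.density_RN_deriv[OF ac sets])
  have fmeas[measurable]: "f \<in> borel_measurable N" unfolding f_def by simp
  have gmeas[measurable]: "g \<in> borel_measurable N" unfolding g_def by simp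
  have finAE: "AE x in N. f x \<noteq> \<infinity>" unfolding f_def
    by (rule N.RN_deriv_finite[OF _ ac sets]) (simp add: M.sigma_finite_measure_axioms)
  have ME: "emeasure M E = (\<integral>\<^sup>+ x. f x * indicator E x \<partial>N)"
    using dens emeasure_density[OF fmeas E] by simp
  define NE where "NE = measure N E"
  have NE: "emeasure N E = ennreal NE" unfolding NE_def by (simp add: N.emeasure_eq_measure)
  have NE0: "0 \<le> NE" unfolding NE_def by simp
  show ?thesis
  proof (cases "Jr = 0 \<or> NE = 0")
    case True
    have "emeasure M E = 0"
    proof (cases "NE = 0")
      case True
      then have "E \<in> null_sets N" using NE E by (simp add: null_sets_def)
      then show ?thesis using ac unfolding absolutely_continuous_def by auto
    next
      case False
      with True have "Jr = 0" by simp
      then have "AE x in N. ennreal (g x powr \<alpha>) = 0"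
      proof -
        have "(\<integral>\<^sup>+ x. ennreal (g x powr \<alpha>) \<partial>N) = 0"
          using J \<open>Jr = 0\<close> by (simp add: g_def f_def)
        then show ?thesis by (subst (asm) nn_integral_0_iff_AE) auto
      qed
      then have "AE x in N. f x * indicator E x = 0"
        using finAE by eventually_elim (auto simp: g_def enn2real_eq_0_iff)
      moreover have "(\<lambda>x. f x * indicator E x) \<in> borel_measurable N"
        using E by simp
      ultimately show ?thesis unfolding ME by (simp add: nn_integral_0_iff_AE)
    qed
    then show ?thesis by simp
  next
    case False
    then have Jp: "0 < Jr" and NEp: "0 < NE" using Jr NE0 by auto
    define q where "q = \<alpha> / (\<alpha> - 1)"
    have q1: "1 < q" using alpha by (simp add: q_def)
    have pq: "1/\<alpha> + 1/q = 1" using alpha by (simp add: q_def field_simps)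
    define A where "A = Jr powr (1/\<alpha>)"
    define B where "B = NE powr ((\<alpha>-1)/\<alpha>)"
    have Ap: "0 < A" and Bp: "0 < B" using Jp NEp by (auto simp: A_def B_def)
    have Aa: "A powr \<alpha> = Jr" using Jp alpha by (simp add: A_def powr_powr)
    have Bq: "B powr q = NE" using NEp alpha by (simp add: B_def powr_powr q_def)
    have pt: "g x * indicator E x \<le> A * B * (g x powr \<alpha> / (\<alpha> * Jr) + indicator E x / (q * NE))" for x
    proof -
      have g0: "0 \<le> g x" by (simp add: g_def)
      have "(g x / A) * (indicator E x / B) \<le> (g x / A) powr \<alpha> / \<alpha> + (indicator E x / B) powr q / q"
        by (rule Youngs_inequality) (use alpha q1 pq g0 Ap Bp in auto)
      also have "(g x / A) powr \<alpha> = g x powr \<alpha> / Jr"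
        using g0 Ap by (simp add: powr_divide Aa)
      also have "(indicator E x / B) powr q = indicator E x / NE"
        using Bp by (simp add: powr_divide Bq indicator_def)
      finally have "(g x / A) * (indicator E x / B) \<le> g x powr \<alpha> / (\<alpha> * Jr) + indicator E x / (q * NE)"
        by (simp add: field_simps)
      then have "A * B * ((g x / A) * (indicator E x / B)) \<le> A * B * (g x powr \<alpha> / (\<alpha> * Jr) + indicator E x / (q * NE))"
        using Ap Bp by (intro mult_left_mono) auto
      then show ?thesis using Ap Bp by (simp add: field_simps)
    qed
    have e1: "ennreal (A * B / (\<alpha> * Jr)) * ennreal Jr = ennreal (A * B / (\<alpha> * Jr) * Jr)"
      using Ap Bp Jp alpha by (intro ennreal_mult[symmetric]) auto
    have e2: "ennreal (A * B / (q * NE)) * ennreal NE = ennreal (A * B / (q * NE) * NE)"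
      using Ap Bp NEp q1 by (intro ennreal_mult[symmetric]) auto
    have "emeasure M E \<le> (\<integral>\<^sup>+ x. ennreal (A * B * (g x powr \<alpha> / (\<alpha> * Jr) + indicator E x / (q * NE))) \<partial>N)"
      unfolding ME
    proof (rule nn_integral_mono_AE)
      show "AE x in N. f x * indicator E x \<le> ennreal (A * B * (g x powr \<alpha> / (\<alpha> * Jr) + indicator E x / (q * NE)))"
        using finAE
      proof eventually_elim
        case (elim x)
        then have "f x = ennreal (g x)" by (simp add: g_def ennreal_enn2real_if)
        then have "f x * indicator E x = ennreal (g x * indicator E x)"
          by (simp add: ennreal_mult' indicator_def)
        also have "\<dots> \<le> ennreal (A * B * (g x powr \<alpha> / (\<alpha> * Jr) + indicator E x / (q * NE)))"
          by (rule ennreal_leI[OF pt])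
        finally show ?case .
      qed
    qed
    also have "\<dots> = (\<integral>\<^sup>+ x. ennreal (A * B / (\<alpha> * Jr)) * ennreal (g x powr \<alpha>) + ennreal (A * B / (q * NE)) * indicator E x \<partial>N)"
      using Ap Bp Jp NEp alpha q1
      by (intro nn_integral_cong) (simp add: field_simps ennreal_mult' flip: ennreal_plus ennreal_mult' split: split_indicator)
    also have "\<dots> = ennreal (A * B / (\<alpha> * Jr)) * (\<integral>\<^sup>+ x. ennreal (g x powr \<alpha>) \<partial>N) + ennreal (A * B / (q * NE)) * emeasure N E"
      using E by (simp add: nn_integral_add nn_integral_cmult)
    also have "\<dots> = ennreal (A * B / (\<alpha> * Jr)) * ennreal Jr + ennreal (A * B / (q * NE)) * ennreal NE"
      using J NE unfolding g_def f_def by simp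
    also have "\<dots> = ennreal (A * B / (\<alpha> * Jr) * Jr) + ennreal (A * B / (q * NE) * NE)"
      by (simp only: e1 e2)
    also have "\<dots> = ennreal (A * B / (\<alpha> * Jr) * Jr + A * B / (q * NE) * NE)"
      using Ap Bp Jp NEp alpha q1 by (intro ennreal_plus[symmetric]) auto
    also have "A * B / (\<alpha> * Jr) * Jr + A * B / (q * NE) * NE = A * B * (1/\<alpha> + 1/q)"
      using Jp NEp by (simp add: field_simps)
    also have "\<dots> = A * B" using pq by simp
    finally show ?thesis by (simp add: A_def B_def NE_def)
  qed
qed

lemma hoeff_section:
  fixes P :: "('x \<times> 'y) measure" and n :: nat and \<eta> :: real and h :: "'x \<Rightarrow> 'y"
  assumes Pp: "prob_space P"
    and Lh: "{z \<in> space P. h (fst z) \<noteq> snd z} \<in> sets P"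
    and eta: "0 < \<eta>"
  shows "emeasure (PiM {..<n} (\<lambda>_. P))
           {s \<in> space (PiM {..<n} (\<lambda>_. P)). \<eta> < \<bar>pop_risk P h - emp_risk n s h\<bar>}
         \<le> ennreal (2 * exp (- 2 * real n * \<eta>\<^sup>2))"
proof -
  define PS where "PS = PiM {..<n} (\<lambda>_. P)"
  interpret P: prob_space P by fact
  interpret PS: prob_space PS unfolding PS_def by (rule prob_space_PiM) (rule Pp)
  define L where "L = {z \<in> space P. h (fst z) \<noteq> snd z}"
  define g where "g z = (if h (fst z) \<noteq> snd z then 1 else 0 :: real)" for z
  have gm[measurable]: "g \<in> borel_measurable P"
  proof -
    have "indicator L \<in> borel_measurable P" using Lh unfolding L_def by simp
    then show ?thesis by (rule measurable_cong[THEN iffD1, rotated]) (auto simp: g_def L_def indicator_def)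
  qed
  define Xi where "Xi = (\<lambda>i (s :: nat \<Rightarrow> 'x \<times> 'y). g (s i))"
  have comp[measurable]: "(\<lambda>s. s i) \<in> PS \<rightarrow>\<^sub>M P" if "i < n" for i
    unfolding PS_def using that by simp
  have Xim[measurable]: "Xi i \<in> borel_measurable PS" if "i < n" for i
    unfolding Xi_def using that by simp
  have dcomp: "distr PS P (\<lambda>s. s i) = P" if "i < n" for i
    unfolding PS_def by (rule distr_PiM_component) (use Pp that in auto)
  have dX: "distr PS borel (Xi i) = distr P borel g" if "i < n" for i
  proof -
    have "distr PS borel (Xi i) = distr (distr PS P (\<lambda>s. s i)) borel g"
      using that by (subst distr_distr) (auto simp: Xi_def comp_def)
    then show ?thesis using dcomp[OF that] by simp
  qed
  show ?thesis
  proof (cases "n = 0")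
    case True
    have "emeasure PS {s \<in> space PS. \<eta> < \<bar>pop_risk P h - emp_risk n s h\<bar>} \<le> 1"
      by (rule PS.emeasure_le_1)
    also have "(1::ennreal) \<le> ennreal (2 * exp (- 2 * real n * \<eta>\<^sup>2))"
      using True by simp
    finally show ?thesis unfolding PS_def .
  next
    case False
    then have n0: "0 < n" by simp
    have indc: "PS.indep_vars (\<lambda>_. P) (\<lambda>i s. s i) {..<n}"
    proof (subst PS.indep_vars_iff_distr_eq_PiM')
      show "{..<n} \<noteq> {}" using n0 by auto
      show "(\<lambda>s. s i) \<in> PS \<rightarrow>\<^sub>M P" if "i \<in> {..<n}" for i using that by (intro comp) auto
      have "distr PS (PiM {..<n} (\<lambda>_. P)) (\<lambda>x. \<lambda>i\<in>{..<n}. x i) = distr PS PS (\<lambda>x. x)"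
        unfolding PS_def
        by (intro distr_cong) (auto simp: space_PiM PiE_def extensional_restrict)
      also have "\<dots> = PS" by simp
      also have "PS = PiM {..<n} (\<lambda>i. distr PS P (\<lambda>s. s i))"
        unfolding PS_def[symmetric] using dcomp by (auto simp: PS_def intro!: PiM_cong)
      finally show "distr PS (PiM {..<n} (\<lambda>_. P)) (\<lambda>x. \<lambda>i\<in>{..<n}. x i) = PiM {..<n} (\<lambda>i. distr PS P (\<lambda>s. s i))" .
    qed
    have indX: "PS.indep_vars (\<lambda>_. borel) Xi {..<n}"
      unfolding Xi_def by (rule PS.indep_vars_compose2[OF indc]) simp
    have EX: "PS.expectation (Xi 0) = measure P L"
    proof -
      have "PS.expectation (Xi 0) = integral\<^sup>L (distr PS borel (Xi 0)) (\<lambda>x. x)"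
        using n0 by (intro integral_distr[symmetric]) auto
      also have "\<dots> = integral\<^sup>L (distr P borel g) (\<lambda>x. x)" using dX n0 by simp
      also have "\<dots> = integral\<^sup>L P g" by (rule integral_distr) auto
      also have "\<dots> = integral\<^sup>L P (indicator L)"
        by (intro Bochner_Integration.integral_cong) (auto simp: g_def L_def indicator_def)
      also have "\<dots> = measure P L" using Lh unfolding L_def by simp
      finally show ?thesis .
    qed
    interpret H: Hoeffding_ineq_iid PS "{..<n}" Xi "Xi 0" 0 1 "PS.expectation (Xi 0)"
    proof unfold_locales
      show "finite {..<n}" by simp
      show "PS.indep_vars (\<lambda>_. borel) Xi {..<n}" by (rule indX)
      show "distr PS borel (Xi i) = distr PS borel (Xi 0)" if "i \<in> {..<n}" for i
        using dX n0 that by simp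
      show "Xi 0 \<in> borel_measurable PS" using n0 by (intro Xim) auto
      show "AE x in PS. Xi 0 x \<in> {0..1}" by (auto simp: Xi_def g_def)
    qed simp
    have B: "PS.prob {x \<in> space PS. \<bar>(\<Sum>i\<in>{..<n}. Xi i x) / real (card {..<n}) - PS.expectation (Xi 0)\<bar> \<ge> \<eta>}
          \<le> 2 * exp (- 2 * real (card {..<n}) * \<eta>\<^sup>2 / (1 - 0)\<^sup>2)"
      by (rule H.Hoeffding_ineq_abs_ge') (use eta n0 in auto)
    define Big where "Big = {x \<in> space PS. \<bar>(\<Sum>i\<in>{..<n}. Xi i x) / real (card {..<n}) - PS.expectation (Xi 0)\<bar> \<ge> \<eta>}"
    have Bigm: "Big \<in> sets PS" unfolding Big_def by measurable
    have sub: "{s \<in> space PS. \<eta> < \<bar>pop_risk P h - emp_risk n s h\<bar>} \<subseteq> Big"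
      unfolding Big_def EX by (auto simp: pop_risk_def emp_risk_def Xi_def g_def L_def)
    have "emeasure PS {s \<in> space PS. \<eta> < \<bar>pop_risk P h - emp_risk n s h\<bar>} \<le> emeasure PS Big"
      by (rule emeasure_mono[OF sub Bigm])
    also have "\<dots> = ennreal (PS.prob Big)" by (simp add: PS.emeasure_eq_measure)
    also have "\<dots> \<le> ennreal (2 * exp (- 2 * real n * \<eta>\<^sup>2))"
      using B unfolding Big_def by (intro ennreal_leI) simp
    finally show ?thesis unfolding PS_def .
  qed
qed

theorem corollary4:
  fixes X :: "'x measure" and Y :: "'y measure"
    and Hm :: "('x \<Rightarrow> 'y) measure"
    and n :: nat
    and P :: "('x \<times> 'y) measure"
    and K :: "(nat \<Rightarrow> 'x \<times> 'y) \<Rightarrow> ('x \<Rightarrow> 'y) measure"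
    and \<eta> \<alpha> :: real
  defines "PS \<equiv> PiM {..<n} (\<lambda>_. P)"
  defines "PSH \<equiv> PS \<bind> (\<lambda>s. distr (K s) (PS \<Otimes>\<^sub>M Hm) (\<lambda>h. (s, h)))"
  defines "PH \<equiv> PS \<bind> K"
  defines "E \<equiv> {(s, h) \<in> space (PS \<Otimes>\<^sub>M Hm). \<bar>pop_risk P h - emp_risk n s h\<bar> > \<eta>}"
  assumes hyp_meas: "\<And>h. h \<in> space Hm \<Longrightarrow> h \<in> X \<rightarrow>\<^sub>M Y"
    and loss_meas: "{(h, z) \<in> space (Hm \<Otimes>\<^sub>M (X \<Otimes>\<^sub>M Y)). h (fst z) \<noteq> snd z}
                      \<in> sets (Hm \<Otimes>\<^sub>M (X \<Otimes>\<^sub>M Y))"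
    and P_prob: "prob_space P"
    and P_sets: "sets P = sets (X \<Otimes>\<^sub>M Y)"
    and K_kernel: "K \<in> PS \<rightarrow>\<^sub>M prob_algebra Hm"
    and abs_cont: "absolutely_continuous (PS \<Otimes>\<^sub>M PH) PSH"
    and eta: "0 < \<eta>" "\<eta> < 1"
    and alpha: "1 < \<alpha>"
  shows "\<forall>I. sibson_mi \<alpha> PS Hm PSH = ereal I \<longrightarrow>
           measure PSH E \<le> exp ((\<alpha> - 1) / \<alpha> * (I + ln 2 - 2 * real n * \<eta>\<^sup>2))"
proof (intro allI impI)
  fix I assume I: "sibson_mi \<alpha> PS Hm PSH = ereal I"
  interpret P: prob_space P by (rule P_prob)
  interpret PS: prob_space PS unfolding PS_def by (rule prob_space_PiM) (rule P_prob)
  have spP: "space P = space (X \<Otimes>\<^sub>M Y)" by (rule sets_eq_imp_space_eq[OF P_sets])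
  have kern: "(\<lambda>s. distr (K s) (PS \<Otimes>\<^sub>M Hm) (\<lambda>h. (s, h))) \<in> PS \<rightarrow>\<^sub>M prob_algebra (PS \<Otimes>\<^sub>M Hm)"
  proof (rule measurable_prob_algebraI)
    fix s assume s: "s \<in> space PS"
    have "K s \<in> space (prob_algebra Hm)" by (rule measurable_space[OF K_kernel s])
    then have "prob_space (K s)" and "sets (K s) = sets Hm" by (auto simp: space_prob_algebra)
    moreover have "(\<lambda>h. (s, h)) \<in> K s \<rightarrow>\<^sub>M PS \<Otimes>\<^sub>M Hm"
      using s \<open>sets (K s) = sets Hm\<close> by (simp cong: measurable_cong_sets)
    ultimately show "prob_space (distr (K s) (PS \<Otimes>\<^sub>M Hm) (\<lambda>h. (s, h)))"
      by (intro prob_space.prob_space_distr) auto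
  next
    show "(\<lambda>s. distr (K s) (PS \<Otimes>\<^sub>M Hm) (\<lambda>h. (s, h))) \<in> PS \<rightarrow>\<^sub>M subprob_algebra (PS \<Otimes>\<^sub>M Hm)"
      by (rule measurable_distr2[where M=Hm]) (auto intro: measurable_prob_algebraD[OF K_kernel])
  qed
  have PSin: "PS \<in> space (prob_algebra PS)"
    by (simp add: space_prob_algebra PS.prob_space_axioms)
  interpret PSH: prob_space PSH unfolding PSH_def by (rule prob_space_bind'[OF PSin kern])
  have setsPSH: "sets PSH = sets (PS \<Otimes>\<^sub>M Hm)" unfolding PSH_def by (rule sets_bind'[OF PSin kern])
  show "measure PSH E \<le> exp ((\<alpha> - 1) / \<alpha> * (I + ln 2 - 2 * real n * \<eta>\<^sup>2))"
  proof (cases "E \<in> sets PSH \<and> measure PSH E > 0")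
    case False
    then have "measure PSH E = 0" by (auto simp: measure_notin_sets not_less intro: antisym)
    then show ?thesis by simp
  next
    case True
    then have Em: "E \<in> sets (PS \<Otimes>\<^sub>M Hm)" and MEp: "0 < measure PSH E" using setsPSH by auto
    define ME where "ME = measure PSH E"
    define c where "c = \<alpha> / (\<alpha> - 1) * ln ME - ln 2 + 2 * real n * \<eta>\<^sup>2"
    have low: "ereal c \<le> renyi_div \<alpha> PSH (PS \<Otimes>\<^sub>M Q)" if Q: "prob_space Q" "sets Q = sets Hm" for Q
    proof -
      interpret Q: prob_space Q by (rule Q(1))
      interpret PQ: pair_prob_space PS Q ..
      have spQ: "space Q = space Hm" by (rule sets_eq_imp_space_eq[OF Q(2)])
      have setsN: "sets (PS \<Otimes>\<^sub>M Q) = sets (PS \<Otimes>\<^sub>M Hm)" using Q(2) by (intro sets_pair_measure_cong) auto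
      have EN: "E \<in> sets (PS \<Otimes>\<^sub>M Q)" using Em setsN by simp
      have "emeasure (PS \<Otimes>\<^sub>M Q) E = (\<integral>\<^sup>+ h. emeasure PS ((\<lambda>s. (s, h)) -` E) \<partial>Q)"
        by (rule PQ.emeasure_pair_measure_alt2[OF EN])
      also have "\<dots> \<le> (\<integral>\<^sup>+ h. ennreal (2 * exp (- 2 * real n * \<eta>\<^sup>2)) \<partial>Q)"
      proof (rule nn_integral_mono)
        fix h assume h: "h \<in> space Q"
        then have hH: "h \<in> space Hm" using spQ by simp
        have sec: "(\<lambda>s. (s, h)) -` E = {s \<in> space PS. \<eta> < \<bar>pop_risk P h - emp_risk n s h\<bar>}"
          using hH unfolding E_def by (auto simp: space_pair_measure)
        have "Pair h -` {(h, z) \<in> space (Hm \<Otimes>\<^sub>M (X \<Otimes>\<^sub>M Y)). h (fst z) \<noteq> snd z} \<in> sets (X \<Otimes>\<^sub>M Y)"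
          by (rule sets_Pair1[OF loss_meas])
        also have "Pair h -` {(h, z) \<in> space (Hm \<Otimes>\<^sub>M (X \<Otimes>\<^sub>M Y)). h (fst z) \<noteq> snd z} = {z \<in> space P. h (fst z) \<noteq> snd z}"
          using hH spP by (auto simp: space_pair_measure)
        finally have Lh: "{z \<in> space P. h (fst z) \<noteq> snd z} \<in> sets P" using P_sets by simp
        show "emeasure PS ((\<lambda>s. (s, h)) -` E) \<le> ennreal (2 * exp (- 2 * real n * \<eta>\<^sup>2))"
          unfolding sec PS_def by (rule hoeff_section[OF P_prob Lh eta(1)])
      qed
      also have "\<dots> = ennreal (2 * exp (- 2 * real n * \<eta>\<^sup>2))"
        by (simp add: Q.emeasure_space_1)
      finally have NEe: "emeasure (PS \<Otimes>\<^sub>M Q) E \<le> ennreal (2 * exp (- 2 * real n * \<eta>\<^sup>2))" .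
      define NE where "NE = measure (PS \<Otimes>\<^sub>M Q) E"
      have NEle: "NE \<le> 2 * exp (- 2 * real n * \<eta>\<^sup>2)"
        using NEe unfolding NE_def by (simp add: PQ.emeasure_eq_measure)
      show ?thesis
      proof (cases "absolutely_continuous (PS \<Otimes>\<^sub>M Q) PSH \<and>
                    (\<integral>\<^sup>+ x. ennreal (enn2real (RN_deriv (PS \<Otimes>\<^sub>M Q) PSH x) powr \<alpha>) \<partial>(PS \<Otimes>\<^sub>M Q)) \<noteq> \<infinity>")
        case False
        then show ?thesis unfolding renyi_div_def by (auto simp: Let_def)
      next
        case True
        define J where "J = (\<integral>\<^sup>+ x. ennreal (enn2real (RN_deriv (PS \<Otimes>\<^sub>M Q) PSH x) powr \<alpha>) \<partial>(PS \<Otimes>\<^sub>M Q))"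
        define Jr where "Jr = enn2real J"
        have JJ: "J = ennreal Jr" using True unfolding Jr_def J_def by (simp add: ennreal_enn2real_if)
        have Jr0: "0 \<le> Jr" unfolding Jr_def by simp
        have rd: "renyi_div \<alpha> PSH (PS \<Otimes>\<^sub>M Q) = ereal (ln Jr / (\<alpha> - 1))"
          using True unfolding renyi_div_def J_def[symmetric] Jr_def by (simp add: Let_def)
        have "emeasure PSH E \<le> ennreal (Jr powr (1/\<alpha>) * NE powr ((\<alpha>-1)/\<alpha>))"
          unfolding NE_def
          by (rule holder_rn[OF PQ.finite_measure_axioms PSH.finite_measure_axioms _ _ alpha EN])
             (use True JJ setsPSH setsN Jr0 in \<open>auto simp: J_def\<close>)
        then have hol: "ME \<le> Jr powr (1/\<alpha>) * NE powr ((\<alpha>-1)/\<alpha>)"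
          unfolding ME_def by (simp add: PSH.emeasure_eq_measure ennreal_le_iff2 del: ennreal_le_iff) (smt (verit) mult_nonneg_nonneg powr_ge_zero)
        have MEp': "0 < ME" using MEp by (simp add: ME_def)
        have NE0: "0 \<le> NE" unfolding NE_def by simp
        have Jp: "0 < Jr" and NEp: "0 < NE"
          using hol MEp' Jr0 NE0 by (auto simp: le_less)
        have "ln ME \<le> ln (Jr powr (1/\<alpha>) * NE powr ((\<alpha>-1)/\<alpha>))"
          using hol MEp' by simp
        also have "\<dots> = ln Jr / \<alpha> + (\<alpha>-1)/\<alpha> * ln NE"
          using Jp NEp by (simp add: ln_mult ln_powr)
        also have "ln NE \<le> ln 2 - 2 * real n * \<eta>\<^sup>2"
        proof -
          have "ln NE \<le> ln (2 * exp (- 2 * real n * \<eta>\<^sup>2))" using NEle NEp by simp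
          also have "\<dots> = ln 2 - 2 * real n * \<eta>\<^sup>2" by (simp add: ln_mult)
          finally show ?thesis .
        qed
        then have "ln Jr / \<alpha> + (\<alpha>-1)/\<alpha> * ln NE \<le> ln Jr / \<alpha> + (\<alpha>-1)/\<alpha> * (ln 2 - 2 * real n * \<eta>\<^sup>2)"
          using alpha by (intro add_left_mono mult_left_mono) auto
        finally have key: "ln ME \<le> ln Jr / \<alpha> + (\<alpha>-1)/\<alpha> * (ln 2 - 2 * real n * \<eta>\<^sup>2)" .
        have "c \<le> ln Jr / (\<alpha> - 1)"
        proof -
          have "\<alpha> / (\<alpha> - 1) * ln ME \<le> \<alpha> / (\<alpha> - 1) * (ln Jr / \<alpha> + (\<alpha>-1)/\<alpha> * (ln 2 - 2 * real n * \<eta>\<^sup>2))"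
            using key alpha by (intro mult_left_mono) auto
          also have "\<dots> = ln Jr / (\<alpha> - 1) + (ln 2 - 2 * real n * \<eta>\<^sup>2)"
            using alpha by (simp add: field_simps)
          finally show ?thesis unfolding c_def by simp
        qed
        then show ?thesis unfolding rd by simp
      qed
    qed
    have "ereal c \<le> sibson_mi \<alpha> PS Hm PSH"
      unfolding sibson_mi_def by (rule INF_greatest) (use low in auto)
    then have cI: "c \<le> I" using I by simp
    have "ln ME \<le> (\<alpha> - 1) / \<alpha> * (I + ln 2 - 2 * real n * \<eta>\<^sup>2)"
    proof -
      have "(\<alpha> - 1) / \<alpha> * (\<alpha> / (\<alpha> - 1) * ln ME) \<le> (\<alpha> - 1) / \<alpha> * (I + ln 2 - 2 * real n * \<eta>\<^sup>2)"
        using cI alpha unfolding c_def by (intro mult_left_mono) auto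
      moreover have "(\<alpha> - 1) / \<alpha> * (\<alpha> / (\<alpha> - 1) * ln ME) = ln ME"
        using alpha by simp
      ultimately show ?thesis by simp
    qed
    then have "exp (ln ME) \<le> exp ((\<alpha> - 1) / \<alpha> * (I + ln 2 - 2 * real n * \<eta>\<^sup>2))" by simp
    then show ?thesis using MEp unfolding ME_def by simp
  qed
qed

end
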